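(* Let $U=\{\xi_1,\dots,\xi_p\}\subset\mathbb{R}^k$ be finite, and for $j\in\Lambda=\{1,\dots,m\}$ let $f_j:\mathbb{R}^n\times U\to\mathbb{R}$ be such that $x\mapsto f_j(x,\xi_i)$ is continuously differentiable for each $i\in\bar\Lambda=\{1,\dots,p\}$. Let $\Phi=(\Phi_1,\dots,\Phi_m)$ with $\Phi_j(x)=\max_{i\in\bar\Lambda} f_j(x,\xi_i)$. If $\tilde x\in\mathbb{R}^n$ is a weak Pareto optimal solution for $\Phi$, then $\tilde x$ is a critical point for $\Phi$. Moreover, if in addition $x\mapsto f_j(x,\xi_i)$ is convex for every $i\in\bar\Lambda$ and $j\in\Lambda$, then every critical point for $\Phi$ is a weak Pareto optimal solution for $\Phi$; thus under convexity weak Pareto optimality and criticality are equivalent.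
   Context: For $x\in\mathbb{R}^n$ and $j\in\Lambda$, $I_j(x)=\{i\in\bar\Lambda: f_j(x,\xi_i)=\Phi_j(x)\}$. A point $x^*$ is a critical point for $\Phi$ if there is no $v\in\mathbb{R}^n$ such that $\nabla f_j(x^*,\xi_i)^Tv<0$ for all $j\in\Lambda$ and all $i\in I_j(x^* )$. A point $x^*$ is a weak Pareto optimal solution for $\Phi$ if there is no $x\in\mathbb{R}^n$ with $\Phi_j(x)<\Phi_j(x^* )$ for all $j\in\Lambda$. Gradients are with respect to $x$. *)

theory Defs
  imports "HOL-Analysis.Analysis"
begin

definition C1_fun :: "(real^'n \<Rightarrow> real) \<Rightarrow> bool" where
  "C1_fun g \<longleftrightarrow> (\<exists>G. (\<forall>x. GDERIV g x :> G x) \<and> continuous_on UNIV G)"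

definition grad :: "(real^'n \<Rightarrow> real) \<Rightarrow> real^'n \<Rightarrow> real^'n" where
  "grad g x = (THE D. GDERIV g x :> D)"

definition Phi :: "(nat \<Rightarrow> real^'n \<Rightarrow> real^'k \<Rightarrow> real) \<Rightarrow> (nat \<Rightarrow> real^'k) \<Rightarrow> nat
                   \<Rightarrow> nat \<Rightarrow> real^'n \<Rightarrow> real" where
  "Phi f \<xi> p j x = Max ((\<lambda>i. f j x (\<xi> i)) ` {1..p})"

definition Iact :: "(nat \<Rightarrow> real^'n \<Rightarrow> real^'k \<Rightarrow> real) \<Rightarrow> (nat \<Rightarrow> real^'k) \<Rightarrow> nat
                   \<Rightarrow> nat \<Rightarrow> real^'n \<Rightarrow> nat set" where
  "Iact f \<xi> p j x = {i \<in> {1..p}. f j x (\<xi> i) = Phi f \<xi> p j x}"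

definition critical_point :: "(nat \<Rightarrow> real^'n \<Rightarrow> real^'k \<Rightarrow> real) \<Rightarrow> (nat \<Rightarrow> real^'k) \<Rightarrow> nat
                   \<Rightarrow> nat \<Rightarrow> real^'n \<Rightarrow> bool" where
  "critical_point f \<xi> m p x \<longleftrightarrow>
     \<not> (\<exists>v. \<forall>j\<in>{1..m}. \<forall>i\<in>Iact f \<xi> p j x. grad (\<lambda>y. f j y (\<xi> i)) x \<bullet> v < 0)"

definition weak_pareto :: "(nat \<Rightarrow> real^'n \<Rightarrow> real^'k \<Rightarrow> real) \<Rightarrow> (nat \<Rightarrow> real^'k) \<Rightarrow> nat
                   \<Rightarrow> nat \<Rightarrow> real^'n \<Rightarrow> bool" where
  "weak_pareto f \<xi> m p x \<longleftrightarrow>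
     \<not> (\<exists>y. \<forall>j\<in>{1..m}. Phi f \<xi> p j y < Phi f \<xi> p j x)"

end

theory Submission
  imports Defs
begin

lemma grad_eq:
  assumes "GDERIV g x :> D"
  shows "grad g x = D"
  unfolding grad_def
proof (rule the_equality)
  show "GDERIV g x :> D" by (fact assms)
next
  fix D' assume d': "GDERIV g x :> D'"
  have eq: "(\<lambda>h. inner h D') = (\<lambda>h. inner h D)"
    by (rule has_derivative_unique[OF d'[unfolded gderiv_def] assms[unfolded gderiv_def]])
  have "inner (D' - D) D' = inner (D' - D) D" using fun_cong[OF eq, of "D' - D"] by simp
  hence "inner (D' - D) (D' - D) = 0" by (simp add: inner_diff_right)
  thus "D' = D" by simp
qed

lemma line_deriv:
  assumes "GDERIV g x :> D"
  shows "((\<lambda>t. g (x + t *\<^sub>R v)) has_real_derivative (inner v D)) (at 0 within S)"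
proof -
  have 1: "((\<lambda>t::real. x + t *\<^sub>R v) has_derivative (\<lambda>t. t *\<^sub>R v)) (at 0 within S)"
    by (auto intro!: derivative_eq_intros)
  have 2: "(g has_derivative (\<lambda>h. inner h D)) (at (x + 0 *\<^sub>R v) within ((\<lambda>t. x + t *\<^sub>R v) ` S))"
    using assms unfolding gderiv_def by (auto intro: has_derivative_at_withinI)
  have "((\<lambda>t. g (x + t *\<^sub>R v)) has_derivative (\<lambda>t. inner (t *\<^sub>R v) D)) (at 0 within S)"
    using has_derivative_in_compose[OF 1 2] by (simp add: o_def)
  moreover have "(\<lambda>t. inner (t *\<^sub>R v) D) = (*) (inner v D)" by (auto simp: fun_eq_iff)
  ultimately show ?thesis unfolding has_field_derivative_def by simp
qed

lemma convex_line:
  assumes "convex_on UNIV g"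
  shows "convex_on UNIV (\<lambda>t::real. g (x + t *\<^sub>R v))"
proof (rule convex_onI)
  fix t a b :: real assume "t > 0" "t < 1"
  have "x + ((1 - t) *\<^sub>R a + t *\<^sub>R b) *\<^sub>R v = (1 - t) *\<^sub>R (x + a *\<^sub>R v) + t *\<^sub>R (x + b *\<^sub>R v)"
    by (simp add: algebra_simps)
  thus "g (x + ((1 - t) *\<^sub>R a + t *\<^sub>R b) *\<^sub>R v) \<le> (1 - t) * g (x + a *\<^sub>R v) + t * g (x + b *\<^sub>R v)"
    using convex_onD[OF assms, of t] \<open>t > 0\<close> \<open>t < 1\<close> by simp
qed auto

theorem lemma4p2:
  fixes f :: "nat \<Rightarrow> real^'n \<Rightarrow> real^'k \<Rightarrow> real"
    and \<xi> :: "nat \<Rightarrow> real^'k"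
    and m p :: nat
  assumes "m \<ge> 1" and "p \<ge> 1"
    and C1: "\<forall>j\<in>{1..m}. \<forall>i\<in>{1..p}. C1_fun (\<lambda>x. f j x (\<xi> i))"
  shows "(\<forall>x. weak_pareto f \<xi> m p x \<longrightarrow> critical_point f \<xi> m p x)
       \<and> ((\<forall>j\<in>{1..m}. \<forall>i\<in>{1..p}. convex_on UNIV (\<lambda>x. f j x (\<xi> i))) \<longrightarrow>
            (\<forall>x. critical_point f \<xi> m p x \<longrightarrow> weak_pareto f \<xi> m p x))"
proof -
  have GD: "GDERIV (\<lambda>x. f j x (\<xi> i)) x :> grad (\<lambda>y. f j y (\<xi> i)) x"
    if "j \<in> {1..m}" "i \<in> {1..p}" for j i x
  proof -
    have "C1_fun (\<lambda>x. f j x (\<xi> i))" using C1 that by blast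
    then obtain G where G: "\<forall>x. GDERIV (\<lambda>x. f j x (\<xi> i)) x :> G x"
      unfolding C1_fun_def by (elim exE conjE) (rule that)
    note g = G[rule_format, of x]
    show ?thesis using g unfolding grad_eq[OF g] .
  qed
  have fin: "finite ((\<lambda>i. f j x (\<xi> i)) ` {1..p})" for j x by simp
  have ne: "(\<lambda>i. f j x (\<xi> i)) ` {1..p} \<noteq> {}" for j x using assms(2) by auto
  have le: "f j x (\<xi> i) \<le> Phi f \<xi> p j x" if "i \<in> {1..p}" for i j x
    unfolding Phi_def using that by (intro Max_ge[OF fin] imageI)
  have part1: "critical_point f \<xi> m p x" if wp: "weak_pareto f \<xi> m p x" for x
  proof (rule ccontr)
    assume "\<not> critical_point f \<xi> m p x"
    then obtain v where v: "\<forall>j\<in>{1..m}. \<forall>i\<in>Iact f \<xi> p j x. grad (\<lambda>y. f j y (\<xi> i)) x \<bullet> v < 0"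
      unfolding critical_point_def by blast
    have ev: "eventually (\<lambda>t. f j (x + t *\<^sub>R v) (\<xi> i) < Phi f \<xi> p j x) (at_right 0)"
      if j: "j \<in> {1..m}" and i: "i \<in> {1..p}" for j i
    proof -
      let ?g = "\<lambda>t. f j (x + t *\<^sub>R v) (\<xi> i)"
      have d: "(?g has_real_derivative (inner v (grad (\<lambda>y. f j y (\<xi> i)) x))) (at 0)"
        using line_deriv[OF GD[OF j i]] by blast
      show ?thesis
      proof (cases "i \<in> Iact f \<xi> p j x")
        case True
        hence eq: "f j x (\<xi> i) = Phi f \<xi> p j x" unfolding Iact_def by auto
        have "inner v (grad (\<lambda>y. f j y (\<xi> i)) x) < 0" using v j True by (simp add: inner_commute)
        from DERIV_neg_dec_right[OF d this] obtain dd where "dd > 0"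
          "\<forall>h>0. h < dd \<longrightarrow> ?g 0 > ?g (0 + h)" by blast
        thus ?thesis unfolding eventually_at_right_field using eq by auto
      next
        case False
        hence lt: "?g 0 < Phi f \<xi> p j x" using le[OF i, of j x] i unfolding Iact_def by auto
        have "isCont ?g 0" using DERIV_isCont[OF d] .
        hence "(?g \<longlongrightarrow> ?g 0) (at_right 0)"
          by (simp add: isCont_def filterlim_at_split)
        from order_tendstoD(2)[OF this lt] show ?thesis .
      qed
    qed
    have that': "eventually (\<lambda>t. \<forall>j\<in>{1..m}. \<forall>i\<in>{1..p}. f j (x + t *\<^sub>R v) (\<xi> i) < Phi f \<xi> p j x) (at_right 0)"
      using ev by (intro eventually_ball_finite ballI) auto
    then obtain t where t: "\<forall>j\<in>{1..m}. \<forall>i\<in>{1..p}. f j (x + t *\<^sub>R v) (\<xi> i) < Phi f \<xi> p j x"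
    proof -
      obtain b :: real where "b > 0" and b: "\<forall>y>0. y < b \<longrightarrow> (\<forall>j\<in>{1..m}. \<forall>i\<in>{1..p}. f j (x + y *\<^sub>R v) (\<xi> i) < Phi f \<xi> p j x)"
        using that' unfolding eventually_at_right_field by blast
      have "b / 2 > 0" "b / 2 < b" using \<open>b > 0\<close> by auto
      thus ?thesis using b that by blast
    qed
    have "\<forall>j\<in>{1..m}. Phi f \<xi> p j (x + t *\<^sub>R v) < Phi f \<xi> p j x"
    proof
      fix j assume j: "j \<in> {1..m}"
      have "\<forall>a\<in>(\<lambda>i. f j (x + t *\<^sub>R v) (\<xi> i)) ` {1..p}. a < Phi f \<xi> p j x"
        using t j by blast
      thus "Phi f \<xi> p j (x + t *\<^sub>R v) < Phi f \<xi> p j x"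
        unfolding Phi_def[of f \<xi> p j "x + t *\<^sub>R v"] using Max_less_iff[OF fin ne] by blast
    qed
    thus False using wp unfolding weak_pareto_def by blast
  qed
  have part2: "weak_pareto f \<xi> m p x"
    if cvx: "\<forall>j\<in>{1..m}. \<forall>i\<in>{1..p}. convex_on UNIV (\<lambda>x. f j x (\<xi> i))"
      and cp: "critical_point f \<xi> m p x" for x
  proof (rule ccontr)
    assume "\<not> weak_pareto f \<xi> m p x"
    then obtain y where y: "\<forall>j\<in>{1..m}. Phi f \<xi> p j y < Phi f \<xi> p j x"
      unfolding weak_pareto_def by blast
    have "grad (\<lambda>z. f j z (\<xi> i)) x \<bullet> (y - x) < 0"
      if j: "j \<in> {1..m}" and i: "i \<in> Iact f \<xi> p j x" for j i
    proof -
      have i': "i \<in> {1..p}" and eq: "f j x (\<xi> i) = Phi f \<xi> p j x" using i unfolding Iact_def by auto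
      let ?g = "\<lambda>t. f j (x + t *\<^sub>R (y - x)) (\<xi> i)"
      have c: "convex_on UNIV ?g" using convex_line cvx j i' by blast
      have d: "(?g has_real_derivative (inner (y - x) (grad (\<lambda>z. f j z (\<xi> i)) x))) (at 0 within UNIV)"
        using line_deriv[OF GD[OF j i']] by blast
      have "?g 1 - ?g 0 \<ge> inner (y - x) (grad (\<lambda>z. f j z (\<xi> i)) x) * (1 - 0)"
        by (rule convex_on_imp_above_tangent[OF c _ _ _ d]) auto
      moreover have "?g 1 \<le> Phi f \<xi> p j y" using le[OF i'] by simp
      moreover have "Phi f \<xi> p j y < Phi f \<xi> p j x" using y j by blast
      moreover have "inner (y - x) (grad (\<lambda>z. f j z (\<xi> i)) x) = grad (\<lambda>z. f j z (\<xi> i)) x \<bullet> (y - x)"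
        by (rule inner_commute)
      ultimately show ?thesis using eq by simp
    qed
    thus False using cp unfolding critical_point_def by blast
  qed
  show ?thesis using part1 part2 by blast
qed

end
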